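(* Let $f\colon\mathbb{R}^n\to\mathbb{R}$ be convex and differentiable with $\|\nabla f(x)-\nabla f(y)\|\le L\|x-y\|$ for all $x,y\in\mathbb{R}^n$ (Euclidean norm, $L>0$), and assume $f$ has a minimizer $x_\star$; write $f_\star=f(x_\star)$. Let $\{\theta_k\}_{k=0}^\infty$ be a positive sequence with $\theta_0=1$ and $0\le\theta_{k+1}^2-\theta_{k+1}\le\theta_k^2$ for $k=0,1,\dots$. Given $x_0\in\mathbb{R}^n$, let $y_0=x_0$ and for $k=0,1,\dots$ \[ y_{k+1}=x_k-\tfrac1L\nabla f(x_k),\qquad x_{k+1}=y_{k+1}+\frac{\theta_k-1}{\theta_{k+1}}(y_{k+1}-y_k)+\frac{\theta_k}{\theta_{k+1}}(y_{k+1}-x_k). \] Then for $k=1,2,\dots$, \[ f(y_k)-f_\star\le\frac{L\|x_0-x_\star\|^2}{4\theta_{k-1}^2}. \]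
   Context: This iteration is the optimized gradient method (OGM). $\|\cdot\|$ denotes the Euclidean norm. *)

theory Defs
  imports "HOL-Analysis.Analysis"
begin

end

theory Submission
  imports Defs "HOL-Analysis.Analysis"
begin


lemma descent_lemma:
  fixes \<phi> :: "'a::real_inner \<Rightarrow> real" and G :: "'a \<Rightarrow> 'a"
  assumes d: "\<And>z. (\<phi> has_derivative (\<lambda>h. G z \<bullet> h)) (at z)"
    and lip: "\<And>u v. norm (G u - G v) \<le> L * norm (u - v)"
  shows "\<phi> v \<le> \<phi> u + G u \<bullet> (v - u) + L / 2 * (norm (v - u))\<^sup>2"
proof -
  define e where "e = v - u"
  define h where "h t = \<phi> (u + t *\<^sub>R e) - \<phi> u - t * (G u \<bullet> e) - L / 2 * t\<^sup>2 * (norm e)\<^sup>2" for t :: real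
  have hd: "(h has_real_derivative (G (u + t *\<^sub>R e) \<bullet> e - G u \<bullet> e - L * t * (norm e)\<^sup>2)) (at t)" for t
  proof -
    have l: "((\<lambda>t. u + t *\<^sub>R e) has_derivative (\<lambda>s. s *\<^sub>R e)) (at t)"
      by (auto intro!: derivative_eq_intros)
    have c: "((\<lambda>t. \<phi> (u + t *\<^sub>R e)) has_derivative (\<lambda>s. G (u + t *\<^sub>R e) \<bullet> (s *\<^sub>R e))) (at t)"
      using has_derivative_compose[OF l d] by simp
    have eq: "(\<lambda>s. G (u + t *\<^sub>R e) \<bullet> (s *\<^sub>R e)) = (*) (G (u + t *\<^sub>R e) \<bullet> e)"
      by (auto simp: fun_eq_iff)
    have c': "((\<lambda>t. \<phi> (u + t *\<^sub>R e)) has_real_derivative (G (u + t *\<^sub>R e) \<bullet> e)) (at t)"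
      unfolding has_field_derivative_def using c eq by simp
    show ?thesis unfolding h_def
      by (rule derivative_eq_intros c' | simp)+
  qed
  have "h 1 \<le> h 0"
  proof (rule DERIV_nonpos_imp_nonincreasing[of 0 1 h])
    fix t :: real assume t: "0 \<le> t" "t \<le> 1"
    have "G (u + t *\<^sub>R e) \<bullet> e - G u \<bullet> e = (G (u + t *\<^sub>R e) - G u) \<bullet> e"
      by (simp add: inner_diff_left)
    also have "\<dots> \<le> norm (G (u + t *\<^sub>R e) - G u) * norm e" by (rule norm_cauchy_schwarz)
    also have "\<dots> \<le> L * norm (t *\<^sub>R e) * norm e"
      using lip[of "u + t *\<^sub>R e" u] by (simp add: mult_right_mono)
    also have "\<dots> = L * t * (norm e)\<^sup>2" using t by (simp add: power2_eq_square)
    finally have "G (u + t *\<^sub>R e) \<bullet> e - G u \<bullet> e - L * t * (norm e)\<^sup>2 \<le> 0" by simp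
    then show "\<exists>y. DERIV h t :> y \<and> y \<le> 0" using hd[of t] by blast
  qed auto
  then show ?thesis unfolding h_def e_def by simp
qed

lemma tangent_ineq:
  fixes f :: "'a::real_inner \<Rightarrow> real"
  assumes cvx: "convex_on UNIV f" and d: "(f has_derivative (\<lambda>h. D \<bullet> h)) (at b)"
  shows "f w \<ge> f b + D \<bullet> (w - b)"
proof -
  define e where "e = w - b"
  define h where "h t = f (b + t *\<^sub>R e)" for t :: real
  have l: "((\<lambda>t. b + t *\<^sub>R e) has_derivative (\<lambda>s. s *\<^sub>R e)) (at 0)"
    by (auto intro!: derivative_eq_intros)
  have c: "(h has_derivative (\<lambda>s. D \<bullet> (s *\<^sub>R e))) (at 0)"
    using has_derivative_compose[OF l, of f "\<lambda>h. D \<bullet> h"] d unfolding h_def by simp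
  have eq: "(\<lambda>s. D \<bullet> (s *\<^sub>R e)) = (*) (D \<bullet> e)"
    by (auto simp: fun_eq_iff)
  have c': "(h has_real_derivative (D \<bullet> e)) (at 0 within UNIV)"
    unfolding has_field_derivative_def using c eq by simp
  have hc: "convex_on UNIV h"
    unfolding h_def
  proof (rule convex_onI)
    fix x y :: real and t :: real assume t: "0 < t" "t < 1"
    have "b + ((1 - t) * x + t * y) *\<^sub>R e = (1 - t) *\<^sub>R (b + x *\<^sub>R e) + t *\<^sub>R (b + y *\<^sub>R e)"
      by (simp add: algebra_simps)
    then show "f (b + ((1 - t) *\<^sub>R x + t *\<^sub>R y) *\<^sub>R e) \<le> (1 - t) * f (b + x *\<^sub>R e) + t * f (b + y *\<^sub>R e)"
      using convex_onD[OF cvx, of t] t by simp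
  qed simp
  have "h 1 - h 0 \<ge> (D \<bullet> e) * (1 - 0)"
    by (rule convex_on_imp_above_tangent[OF hc]) (use c' in auto)
  then show ?thesis unfolding h_def e_def by simp
qed

lemma interp_ineq:
  fixes f :: "'a::real_inner \<Rightarrow> real" and df :: "'a \<Rightarrow> 'a"
  assumes cvx: "convex_on UNIV f"
    and grad: "\<And>z. (f has_derivative (\<lambda>h. df z \<bullet> h)) (at z)"
    and lip: "\<And>u v. norm (df u - df v) \<le> L * norm (u - v)"
    and Lpos: "L > 0"
  shows "f a \<ge> f b + df b \<bullet> (a - b) + (norm (df a - df b))\<^sup>2 / (2 * L)"
proof -
  define \<phi> where "\<phi> w = f w - df b \<bullet> w" for w
  define G where "G w = df w - df b" for w
  have d: "(\<phi> has_derivative (\<lambda>h. G z \<bullet> h)) (at z)" for z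
    unfolding \<phi>_def G_def
    by (rule derivative_eq_intros grad | simp add: inner_diff_left)+
  have l: "norm (G u - G v) \<le> L * norm (u - v)" for u v
    unfolding G_def using lip[of u v] by simp
  define v where "v = a - (1 / L) *\<^sub>R G a"
  have "\<phi> v \<le> \<phi> a + G a \<bullet> (v - a) + L / 2 * (norm (v - a))\<^sup>2"
    by (rule descent_lemma[OF d l])
  also have "\<dots> = \<phi> a - (norm (G a))\<^sup>2 / (2 * L)"
  proof -
    have e1: "G a \<bullet> (v - a) = - (norm (G a))\<^sup>2 / L"
      by (simp add: v_def power2_norm_eq_inner)
    have e2: "(norm (v - a))\<^sup>2 = (norm (G a))\<^sup>2 / L\<^sup>2"
      using Lpos by (simp add: v_def power_divide power_mult_distrib)
    show ?thesis unfolding e1 e2 using Lpos by (simp add: field_simps power2_eq_square)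
  qed
  finally have 1: "\<phi> v \<le> \<phi> a - (norm (G a))\<^sup>2 / (2 * L)" .
  have "f v \<ge> f b + df b \<bullet> (v - b)" by (rule tangent_ineq[OF cvx grad])
  then have "\<phi> b \<le> \<phi> v" unfolding \<phi>_def by (simp add: inner_diff_right)
  with 1 show ?thesis unfolding \<phi>_def G_def by (simp add: inner_diff_right)
qed

lemma zlem:
  fixes X1 Y1 X Y G :: "'a::real_vector"
  assumes h: "t1 *\<^sub>R X1 = t1 *\<^sub>R Y1 + (t - 1) *\<^sub>R (Y1 - Y) + t *\<^sub>R (Y1 - X)"
    and y: "Y1 = X - (1/L) *\<^sub>R G"
  shows "t1 *\<^sub>R X1 - (t1 - 1) *\<^sub>R Y1 = t *\<^sub>R X - (t - 1) *\<^sub>R Y - (2 * t / L) *\<^sub>R G"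
  unfolding h y by (simp add: algebra_simps) (simp only: scaleR_add_left[symmetric], rule arg_cong[where f="\<lambda>c. c *\<^sub>R G"], simp add: add_divide_distrib[symmetric] diff_divide_distrib[symmetric])

lemma nexp:
  fixes a b :: "'a::real_inner"
  shows "(norm (a - c *\<^sub>R b))\<^sup>2 = (norm a)\<^sup>2 - 2 * c * (b \<bullet> a) + c\<^sup>2 * (b \<bullet> b)"
  unfolding power2_norm_eq_inner by (simp add: inner_diff_left inner_diff_right inner_commute algebra_simps power2_eq_square)


theorem theorem1:
  fixes f :: "real ^ 'n \<Rightarrow> real"
    and df :: "real ^ 'n \<Rightarrow> real ^ 'n"
    and L :: real
    and xstar :: "real ^ 'n"
    and \<theta> :: "nat \<Rightarrow> real"
    and x y :: "nat \<Rightarrow> real ^ 'n"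
  assumes cvx: "convex_on UNIV f"
    and grad: "\<And>z. (f has_derivative (\<lambda>h. df z \<bullet> h)) (at z)"
    and lip: "\<And>u v. norm (df u - df v) \<le> L * norm (u - v)"
    and Lpos: "L > 0"
    and minim: "\<And>z. f xstar \<le> f z"
    and \<theta>pos: "\<And>k. \<theta> k > 0"
    and \<theta>0: "\<theta> 0 = 1"
    and \<theta>lo: "\<And>k. 0 \<le> (\<theta> (Suc k))\<^sup>2 - \<theta> (Suc k)"
    and \<theta>hi: "\<And>k. (\<theta> (Suc k))\<^sup>2 - \<theta> (Suc k) \<le> (\<theta> k)\<^sup>2"
    and y0: "y 0 = x 0"
    and ystep: "\<And>k. y (Suc k) = x k - (1 / L) *\<^sub>R df (x k)"
    and xstep: "\<And>k. x (Suc k) = y (Suc k)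
                  + ((\<theta> k - 1) / \<theta> (Suc k)) *\<^sub>R (y (Suc k) - y k)
                  + (\<theta> k / \<theta> (Suc k)) *\<^sub>R (y (Suc k) - x k)"
    and k1: "k \<ge> 1"
  shows "f (y k) - f xstar \<le> L * (norm (x 0 - xstar))\<^sup>2 / (4 * (\<theta> (k - 1))\<^sup>2)"
proof -
  define g where "g k = df (x k)" for k
  define F where "F k = f (x k) - (norm (g k))\<^sup>2 / (2 * L)" for k
  define z where "z k = \<theta> k *\<^sub>R x k - (\<theta> k - 1) *\<^sub>R y k" for k
  define R where "R = norm (x 0 - xstar)"
  define \<Phi> where "\<Phi> k = 4 * (\<theta> k)\<^sup>2 / L * (F k - f xstar) + (norm (z (Suc k) - xstar))\<^sup>2" for k
  have gg: "(norm (g k))\<^sup>2 = g k \<bullet> g k" for k by (simp add: power2_norm_eq_inner)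
  have A: "f (y (Suc k)) \<le> F k" for k
  proof -
    have "f (y (Suc k)) \<le> f (x k) + df (x k) \<bullet> (y (Suc k) - x k) + L / 2 * (norm (y (Suc k) - x k))\<^sup>2"
      by (rule descent_lemma[OF grad lip])
    also have "\<dots> = F k"
    proof -
      have e1: "df (x k) \<bullet> (y (Suc k) - x k) = - (norm (g k))\<^sup>2 / L"
        by (simp add: ystep g_def power2_norm_eq_inner)
      have e2: "(norm (y (Suc k) - x k))\<^sup>2 = (norm (g k))\<^sup>2 / L\<^sup>2"
        using Lpos by (simp add: ystep g_def power_divide power_mult_distrib)
      show ?thesis unfolding e1 e2 F_def using Lpos by (simp add: field_simps power2_eq_square)
    qed
    finally show ?thesis .
  qed
  have B: "F i - F j \<le> g i \<bullet> (y (Suc i) - y (Suc j))" for i j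
  proof -
    have h: "f (x j) \<ge> f (x i) + (g i \<bullet> x j - g i \<bullet> x i) + (g j \<bullet> g j - 2 * (g i \<bullet> g j) + g i \<bullet> g i) / (2 * L)"
    proof -
      have "f (x j) \<ge> f (x i) + df (x i) \<bullet> (x j - x i) + (norm (df (x j) - df (x i)))\<^sup>2 / (2 * L)"
        by (rule interp_ineq[OF cvx grad lip Lpos])
      moreover have "(norm (g j - g i))\<^sup>2 = g j \<bullet> g j - 2 * (g i \<bullet> g j) + g i \<bullet> g i"
        by (simp add: power2_norm_eq_inner inner_diff_left inner_diff_right inner_commute)
      ultimately show ?thesis unfolding g_def by (simp add: inner_diff_right)
    qed
    have e: "g i \<bullet> (y (Suc i) - y (Suc j)) = g i \<bullet> x i - g i \<bullet> x j - (g i \<bullet> g i) / L + (g i \<bullet> g j) / L"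
      unfolding ystep g_def[symmetric] by (simp add: inner_diff_right)
    have aux: "\<And>a b p q G1 G2 c. b \<ge> a + (q - p) + (G2 - 2 * c + G1) / (2 * L) \<Longrightarrow>
        a - G1 / (2 * L) - (b - G2 / (2 * L)) \<le> p - q - G1 / L + c / L"
    proof -
      fix a b p q G1 G2 c :: real
      assume hh: "b \<ge> a + (q - p) + (G2 - 2 * c + G1) / (2 * L)"
      have "G1 / L = 2 * (G1 / (2 * L))" "c / L = 2 * (c / (2 * L))"
        "(G2 - 2 * c + G1) / (2 * L) = G2 / (2 * L) - 2 * (c / (2 * L)) + G1 / (2 * L)"
        using Lpos by (simp_all add: field_simps)
      then show "a - G1 / (2 * L) - (b - G2 / (2 * L)) \<le> p - q - G1 / L + c / L"
        using hh by linarith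
    qed
    show ?thesis unfolding e F_def gg by (rule aux[OF h])
  qed
  have C: "F i - f xstar \<le> g i \<bullet> (y (Suc i) - xstar)" for i
  proof -
    have "f xstar \<ge> f (x i) + df (x i) \<bullet> (xstar - x i) + (norm (df xstar - df (x i)))\<^sup>2 / (2 * L)"
      by (rule interp_ineq[OF cvx grad lip Lpos])
    moreover have "df xstar = 0"
    proof -
      have "(\<lambda>h. df xstar \<bullet> h) = (\<lambda>h. 0)"
        by (rule has_derivative_local_min[OF grad]) (use minim in auto)
      then have "df xstar \<bullet> df xstar = 0" by meson
      then show ?thesis by simp
    qed
    ultimately have h: "f xstar \<ge> f (x i) + (g i \<bullet> xstar - g i \<bullet> x i) + (g i \<bullet> g i) / (2 * L)"
      unfolding g_def by (simp add: inner_diff_right power2_norm_eq_inner)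
    have e: "g i \<bullet> (y (Suc i) - xstar) = g i \<bullet> x i - (g i \<bullet> g i) / L - g i \<bullet> xstar"
      unfolding ystep g_def[symmetric] by (simp add: inner_diff_right)
    have "(g i \<bullet> g i) / L = 2 * ((g i \<bullet> g i) / (2 * L))" using Lpos by simp
    then show ?thesis unfolding e F_def gg using h by linarith
  qed
  have Z: "z (Suc k) = z k - (2 * \<theta> k / L) *\<^sub>R g k" for k
  proof -
    have "\<theta> (Suc k) *\<^sub>R x (Suc k) = \<theta> (Suc k) *\<^sub>R y (Suc k) + (\<theta> k - 1) *\<^sub>R (y (Suc k) - y k) + \<theta> k *\<^sub>R (y (Suc k) - x k)"
      using \<theta>pos[of "Suc k"] unfolding xstep[of k] by (simp add: scaleR_add_right)
    then show ?thesis unfolding z_def g_def by (rule zlem[OF _ ystep])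
  qed
  have Fge: "F k - f xstar \<ge> 0" for k using A[of k] minim[of "y (Suc k)"] by linarith
  have zexp: "(norm (z (Suc j) - xstar))\<^sup>2 = (norm (z j - xstar))\<^sup>2 - 4 * \<theta> j / L * (g j \<bullet> (z j - xstar))
      + 4 * (\<theta> j)\<^sup>2 / L\<^sup>2 * (g j \<bullet> g j)" for j
  proof -
    have eq: "z (Suc j) - xstar = (z j - xstar) - (2 * \<theta> j / L) *\<^sub>R g j" unfolding Z by simp
    show ?thesis unfolding eq nexp by (simp add: power_divide power_mult_distrib)
  qed
  have Phi0: "\<Phi> 0 \<le> R\<^sup>2"
  proof -
    have z0: "z 0 = x 0" unfolding z_def \<theta>0 by simp
    have c: "F 0 - f xstar \<le> g 0 \<bullet> (x 0 - xstar) - (g 0 \<bullet> g 0) / L"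
      using C[of 0] unfolding ystep g_def[symmetric] by (simp add: inner_diff_right)
    have "\<Phi> 0 = 4 / L * (F 0 - f xstar) + R\<^sup>2 - 4 / L * (g 0 \<bullet> (x 0 - xstar)) + 4 / L\<^sup>2 * (g 0 \<bullet> g 0)"
      unfolding \<Phi>_def zexp z0 \<theta>0 R_def by simp
    also have "\<dots> \<le> 4 / L * (g 0 \<bullet> (x 0 - xstar) - (g 0 \<bullet> g 0) / L) + R\<^sup>2 - 4 / L * (g 0 \<bullet> (x 0 - xstar)) + 4 / L\<^sup>2 * (g 0 \<bullet> g 0)"
    proof -
      have "4 / L * (F 0 - f xstar) \<le> 4 / L * (g 0 \<bullet> (x 0 - xstar) - (g 0 \<bullet> g 0) / L)"
        by (rule mult_left_mono[OF c]) (use Lpos in simp)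
      then show ?thesis by linarith
    qed
    also have "\<dots> = R\<^sup>2" using Lpos by (simp add: field_simps power2_eq_square)
    finally show ?thesis .
  qed
  have Phistep: "\<Phi> (Suc k) \<le> \<Phi> k" for k
  proof -
    define j where "j = Suc k"
    define P where "P = (\<theta> j)\<^sup>2 - \<theta> j"
    define Aa where "Aa = F k - f xstar"
    define Cc where "Cc = F j - f xstar"
    define b1 where "b1 = g j \<bullet> (y (Suc j) - y j)"
    define c1 where "c1 = g j \<bullet> (y (Suc j) - xstar)"
    define gz where "gz = g j \<bullet> (z j - xstar)"
    define G where "G = g j \<bullet> g j"
    have P0: "P \<ge> 0" unfolding P_def j_def by (rule \<theta>lo)
    have Pk: "P \<le> (\<theta> k)\<^sup>2" unfolding P_def j_def by (rule \<theta>hi)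
    have A0: "Aa \<ge> 0" unfolding Aa_def by (rule Fge)
    have hb: "Cc - Aa \<le> b1" unfolding Cc_def Aa_def b1_def using B[of j k] unfolding j_def by simp
    have hc: "Cc \<le> c1" unfolding Cc_def c1_def by (rule C)
    have tj: "\<theta> j > 0" by (rule \<theta>pos)
    have id: "(\<theta> j - 1) * b1 + c1 - gz + \<theta> j * G / L = 0"
    proof -
      have e1: "b1 = g j \<bullet> x j - G / L - g j \<bullet> y j"
        unfolding b1_def G_def ystep g_def[symmetric] by (simp add: inner_diff_right)
      have e2: "c1 = g j \<bullet> x j - G / L - g j \<bullet> xstar"
        unfolding c1_def G_def ystep g_def[symmetric] by (simp add: inner_diff_right)
      have e3: "gz = \<theta> j * (g j \<bullet> x j) - (\<theta> j - 1) * (g j \<bullet> y j) - g j \<bullet> xstar"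
        unfolding gz_def z_def by (simp add: inner_diff_right)
      show ?thesis unfolding e1 e2 e3 by (simp add: algebra_simps)
    qed
    have m1: "P * Aa \<le> (\<theta> k)\<^sup>2 * Aa" using Pk A0 by (rule mult_right_mono)
    have m2: "P * (Cc - Aa) \<le> P * b1" using hb P0 by (rule mult_left_mono)
    have m3: "\<theta> j * Cc \<le> \<theta> j * c1" using hc tj by simp
    have key: "P * b1 + \<theta> j * c1 - \<theta> j * gz + (\<theta> j)\<^sup>2 * G / L = 0"
    proof -
      have "\<theta> j * ((\<theta> j - 1) * b1 + c1 - gz + \<theta> j * G / L) = 0" using id by simp
      then show ?thesis unfolding P_def by (simp add: algebra_simps power2_eq_square)
    qed
    have split: "(\<theta> j)\<^sup>2 * Cc = P * (Cc - Aa) + \<theta> j * Cc + P * Aa"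
      unfolding P_def by (simp add: algebra_simps power2_eq_square)
    have E: "(\<theta> j)\<^sup>2 * Cc - (\<theta> k)\<^sup>2 * Aa - \<theta> j * gz + (\<theta> j)\<^sup>2 * G / L \<le> 0"
      using split m1 m2 m3 key by linarith
    have "\<Phi> (Suc k) - \<Phi> k = 4 / L * ((\<theta> j)\<^sup>2 * Cc - (\<theta> k)\<^sup>2 * Aa - \<theta> j * gz + (\<theta> j)\<^sup>2 * G / L)"
      unfolding \<Phi>_def zexp[of j] j_def[symmetric] Cc_def Aa_def gz_def G_def using Lpos
      by (simp add: field_simps power2_eq_square)
    also have "\<dots> \<le> 0" by (rule mult_nonneg_nonpos) (use E Lpos in auto)
    finally show ?thesis by simp
  qed
  have PhiR: "\<Phi> k \<le> R\<^sup>2" for k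
  proof (induction k)
    case 0 then show ?case by (rule Phi0)
  next
    case (Suc k) then show ?case using Phistep[of k] by linarith
  qed
  obtain m where km: "k = Suc m" using k1 by (cases k) auto
  have tm: "\<theta> m > 0" by (rule \<theta>pos)
  have "4 * (\<theta> m)\<^sup>2 / L * (F m - f xstar) \<le> \<Phi> m"
    unfolding \<Phi>_def by simp
  also have "\<dots> \<le> R\<^sup>2" by (rule PhiR)
  finally have "4 * (\<theta> m)\<^sup>2 / L * (F m - f xstar) \<le> R\<^sup>2" .
  then have "F m - f xstar \<le> L * R\<^sup>2 / (4 * (\<theta> m)\<^sup>2)"
    using Lpos tm by (simp add: field_simps)
  then show ?thesis unfolding km R_def using A[of m] by simp
qed

end
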